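(* Let $0\le\gamma\le1$ and let $g\colon\{0,1\}^m\to\{0,1\}^n$ be a $(d,r)$-local function. Then $$\|g(\mathcal{U}^m)-\mathcal{U}^n_\gamma\|\ge 1-2\exp\left\{-\frac{\mathsf{err}(\gamma,d)^2\cdot r}{2}\right\}.$$
   Context: $\mathcal{U}^m$ is uniform on $\{0,1\}^m$; $\mathcal{U}^n_\gamma$ is the product distribution on $\{0,1\}^n$ with each bit independently $1$ with probability $\gamma$. A function $g\colon\{0,1\}^m\to\{0,1\}^n$ is $d$-local if each output bit depends on at most $d$ input bits; for an output index $i$, let $I_g(i)\subseteq[m]$ be the set of input coordinates on which output bit $i$ depends. Output bits $i_1,\dots,i_r$ are non-connected if the sets $I_g(i_1),\dots,I_g(i_r)$ are pairwise disjoint. $g$ is $(d,r)$-local if it is $d$-local and has $r$ non-connected output bits. $\mathsf{err}(\gamma,t)$ is the minimum distance of $\gamma$ to an integer multiple of $2^{-t}$. $\|\cdot\|$ is total variation distance. *)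

theory Defs
  imports "HOL-Analysis.Analysis"
begin

text \<open>Bit strings of length m: functions nat => bool that vanish outside {0..<m}.\<close>
definition cube :: "nat \<Rightarrow> (nat \<Rightarrow> bool) set" where
  "cube m = {x. \<forall>i. m \<le> i \<longrightarrow> \<not> x i}"

definition dep_set :: "nat \<Rightarrow> ((nat \<Rightarrow> bool) \<Rightarrow> (nat \<Rightarrow> bool)) \<Rightarrow> nat \<Rightarrow> nat set" where
  "dep_set m g i = {j. j < m \<and> (\<exists>x\<in>cube m. g x i \<noteq> g (x(j := \<not> x j)) i)}"

definition d_local :: "nat \<Rightarrow> nat \<Rightarrow> ((nat \<Rightarrow> bool) \<Rightarrow> (nat \<Rightarrow> bool)) \<Rightarrow> nat \<Rightarrow> bool" where
  "d_local m n g d = (\<forall>i<n. card (dep_set m g i) \<le> d)"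

definition dr_local :: "nat \<Rightarrow> nat \<Rightarrow> ((nat \<Rightarrow> bool) \<Rightarrow> (nat \<Rightarrow> bool)) \<Rightarrow> nat \<Rightarrow> nat \<Rightarrow> bool" where
  "dr_local m n g d r = (d_local m n g d \<and>
     (\<exists>S. S \<subseteq> {..<n} \<and> card S = r \<and>
          (\<forall>i\<in>S. \<forall>j\<in>S. i \<noteq> j \<longrightarrow> dep_set m g i \<inter> dep_set m g j = {})))"

definition push_unif :: "nat \<Rightarrow> ((nat \<Rightarrow> bool) \<Rightarrow> (nat \<Rightarrow> bool)) \<Rightarrow> (nat \<Rightarrow> bool) \<Rightarrow> real" where
  "push_unif m g y = real (card {x\<in>cube m. g x = y}) / 2 ^ m"

definition biased :: "nat \<Rightarrow> real \<Rightarrow> (nat \<Rightarrow> bool) \<Rightarrow> real" where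
  "biased n \<gamma> y = (\<Prod>i<n. if y i then \<gamma> else 1 - \<gamma>)"

definition tv_dist :: "nat \<Rightarrow> ((nat \<Rightarrow> bool) \<Rightarrow> real) \<Rightarrow> ((nat \<Rightarrow> bool) \<Rightarrow> real) \<Rightarrow> real" where
  "tv_dist n P Q = (1/2) * (\<Sum>y\<in>cube n. \<bar>P y - Q y\<bar>)"

definition err :: "real \<Rightarrow> nat \<Rightarrow> real" where
  "err \<gamma> t = Inf {\<bar>\<gamma> - real_of_int k / 2 ^ t\<bar> | k. True}"

end

theory Submission imports Defs "HOL-Probability.Probability" begin

lemma cube_eq: "cube n = {f. \<forall>x. x \<notin> {..<n} \<longrightarrow> f x = False}"
  by (auto simp: cube_def)

lemma finite_cube: "finite (cube n)"
proof -
  have "cube n = PiE_dflt {..<n} False (\<lambda>_. UNIV)" by (auto simp: cube_def PiE_dflt_def)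
  thus ?thesis by auto
qed

lemma set_pmf_Pi_cube: "set_pmf (Pi_pmf {..<n} False p) \<subseteq> cube n"
  using set_Pi_pmf_subset[of "{..<n}" False p] by (auto simp: cube_eq)

lemma pmf_Pi_cube: "y \<in> cube n \<Longrightarrow> pmf (Pi_pmf {..<n} False p) y = (\<Prod>i<n. pmf (p i) (y i))"
  by (rule pmf_Pi') (auto simp: cube_def)

lemma measure_Pi_cube:
  assumes "B \<subseteq> cube n"
  shows "measure (Pi_pmf {..<n} False p) B = (\<Sum>y\<in>B. \<Prod>i<n. pmf (p i) (y i))"
proof -
  have fB: "finite B" using assms finite_cube finite_subset by blast
  have "measure (Pi_pmf {..<n} False p) B = (\<Sum>y\<in>B. pmf (Pi_pmf {..<n} False p) y)"
    using fB by (rule measure_measure_pmf_finite)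
  also have "\<dots> = (\<Sum>y\<in>B. \<Prod>i<n. pmf (p i) (y i))"
    using assms by (intro sum.cong refl pmf_Pi_cube) blast
  finally show ?thesis .
qed

lemma measure_restrict_cube:
  "measure (Pi_pmf {..<n} False p) B = measure (Pi_pmf {..<n} False p) (B \<inter> cube n)"
proof -
  let ?P = "Pi_pmf {..<n} False p"
  have e: "B \<inter> set_pmf ?P = (B \<inter> cube n) \<inter> set_pmf ?P"
    using set_pmf_Pi_cube[of n p] by blast
  have "measure ?P B = measure ?P (B \<inter> set_pmf ?P)" by (rule measure_Int_set_pmf[symmetric])
  also have "\<dots> = measure ?P ((B \<inter> cube n) \<inter> set_pmf ?P)" by (simp only: e)
  also have "\<dots> = measure ?P (B \<inter> cube n)" by (rule measure_Int_set_pmf)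
  finally show ?thesis .
qed

definition Ux :: "nat \<Rightarrow> (nat \<Rightarrow> bool) pmf" where
  "Ux m = Pi_pmf {..<m} False (\<lambda>_. bernoulli_pmf (1/2))"

lemma measure_Ux: "measure (Ux m) B = real (card (B \<inter> cube m)) / 2 ^ m"
proof -
  have "measure (Ux m) B = (\<Sum>y\<in>B \<inter> cube m. \<Prod>i<m. pmf (bernoulli_pmf (1/2)) (y i))"
    unfolding Ux_def by (subst measure_restrict_cube, rule measure_Pi_cube) auto
  thus ?thesis by (simp add: power_one_over)
qed

lemma pmf_map_Ux: "pmf (map_pmf g (Ux m)) y = push_unif m g y"
  unfolding pmf_map measure_Ux push_unif_def
  by (rule arg_cong[where f="\<lambda>k. real (card k) / 2^m"]) auto

lemma pmf_Ub: "0 \<le> \<gamma> \<Longrightarrow> \<gamma> \<le> 1 \<Longrightarrow> y \<in> cube n \<Longrightarrow>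
   pmf (Pi_pmf {..<n} False (\<lambda>_. bernoulli_pmf \<gamma>)) y = biased n \<gamma> y"
  unfolding biased_def by (subst pmf_Pi_cube) (auto intro!: prod.cong split: if_splits)

lemma tv_lemma:
  fixes P Q :: "'a pmf"
  assumes C: "finite C" "set_pmf P \<subseteq> C" "set_pmf Q \<subseteq> C" and A: "A \<subseteq> C"
  shows "(1/2) * (\<Sum>y\<in>C. \<bar>pmf P y - pmf Q y\<bar>) \<ge> measure P A - measure Q A"
proof -
  have fA: "finite A" using A C finite_subset by blast
  have PC: "(\<Sum>y\<in>C. pmf P y) = 1"
    using C by (simp add: measure_pmf.prob_eq_1 AE_measure_pmf_iff subset_iff flip: measure_measure_pmf_finite)
  have QC: "(\<Sum>y\<in>C. pmf Q y) = 1"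
    using C by (simp add: measure_pmf.prob_eq_1 AE_measure_pmf_iff subset_iff flip: measure_measure_pmf_finite)
  have sP: "(\<Sum>y\<in>C. pmf P y) = (\<Sum>y\<in>C-A. pmf P y) + (\<Sum>y\<in>A. pmf P y)"
    using A C by (intro sum.subset_diff) auto
  have sQ: "(\<Sum>y\<in>C. pmf Q y) = (\<Sum>y\<in>C-A. pmf Q y) + (\<Sum>y\<in>A. pmf Q y)"
    using A C by (intro sum.subset_diff) auto
  have sD: "(\<Sum>y\<in>C. \<bar>pmf P y - pmf Q y\<bar>) = (\<Sum>y\<in>C-A. \<bar>pmf P y - pmf Q y\<bar>) + (\<Sum>y\<in>A. \<bar>pmf P y - pmf Q y\<bar>)"
    using A C by (intro sum.subset_diff) auto
  have i1: "(\<Sum>y\<in>A. \<bar>pmf P y - pmf Q y\<bar>) \<ge> (\<Sum>y\<in>A. pmf P y) - (\<Sum>y\<in>A. pmf Q y)"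
    unfolding sum_subtractf[symmetric] by (intro sum_mono) auto
  have i2: "(\<Sum>y\<in>C-A. \<bar>pmf P y - pmf Q y\<bar>) \<ge> (\<Sum>y\<in>C-A. pmf Q y) - (\<Sum>y\<in>C-A. pmf P y)"
    unfolding sum_subtractf[symmetric] by (intro sum_mono) auto
  have mA: "measure P A = (\<Sum>y\<in>A. pmf P y)" "measure Q A = (\<Sum>y\<in>A. pmf Q y)"
    using fA by (auto simp: measure_measure_pmf_finite)
  show ?thesis using PC QC sP sQ sD i1 i2 mA by linarith
qed

lemma dep_only:
  assumes "x \<in> cube m" "x' \<in> cube m" "\<forall>j\<in>dep_set m g i. x j = x' j"
  shows "g x i = g x' i"
  using assms
proof (induction "card {j. x j \<noteq> x' j}" arbitrary: x)
  case 0
  have "{j. x j \<noteq> x' j} \<subseteq> {..<m}" using 0 by (auto simp: cube_def) (meson not_le)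
  hence "finite {j. x j \<noteq> x' j}" using finite_subset by blast
  with 0 have "x = x'" by auto
  thus ?case by simp
next
  case (Suc k)
  have sub: "{j. x j \<noteq> x' j} \<subseteq> {..<m}" using Suc by (auto simp: cube_def) (meson not_le)
  hence fin: "finite {j. x j \<noteq> x' j}" using finite_subset by blast
  from Suc.hyps(2) have "{j. x j \<noteq> x' j} \<noteq> {}" by (metis card.empty nat.distinct(1))
  then obtain j where j: "x j \<noteq> x' j" by auto
  have jm: "j < m" using j sub by auto
  have jD: "j \<notin> dep_set m g i" using j Suc.prems by auto
  hence flip: "\<forall>z\<in>cube m. g z i = g (z(j := \<not> z j)) i" using jm by (auto simp: dep_set_def)
  define x1 where "x1 = x(j := \<not> x j)"
  have x1c: "x1 \<in> cube m" using Suc.prems(1) jm by (auto simp: cube_def x1_def)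
  have "{l. x1 l \<noteq> x' l} = {j. x j \<noteq> x' j} - {j}" using j by (auto simp: x1_def)
  hence "k = card {l. x1 l \<noteq> x' l}" using Suc.hyps(2) j fin by simp
  moreover have "\<forall>l\<in>dep_set m g i. x1 l = x' l" using Suc.prems(3) jD by (auto simp: x1_def)
  ultimately have "g x1 i = g x' i" using Suc.hyps(1) x1c Suc.prems(2) by blast
  moreover have "g x i = g x1 i" using flip Suc.prems(1) by (simp add: x1_def)
  ultimately show ?case by simp
qed

lemma dep_set_sub: "dep_set m g i \<subseteq> {..<m}"
  by (auto simp: dep_set_def)

lemma measurable_PiM_finite:
  assumes "finite D"
  shows "(F :: (nat \<Rightarrow> bool) \<Rightarrow> real) \<in> borel_measurable (PiM D (\<lambda>_. count_space UNIV))"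
proof (rule measurableI)
  fix A :: "real set"
  let ?S = "space (PiM D (\<lambda>_. count_space (UNIV::bool set)))"
  have fS: "finite ?S" using assms by (simp add: space_PiM finite_PiE)
  have sing: "{z} \<in> sets (PiM D (\<lambda>_. count_space UNIV))" if "z \<in> ?S" for z
  proof -
    have "{z} = PiE D (\<lambda>i. {z i})" using that
      by (auto simp: space_PiM PiE_def extensional_def Pi_def fun_eq_iff)
    also have "\<dots> \<in> sets (PiM D (\<lambda>_. count_space UNIV))"
      using assms by (intro sets_PiM_I_finite) auto
    finally show ?thesis .
  qed
  have "F -` A \<inter> ?S = (\<Union>z\<in>F -` A \<inter> ?S. {z})" by auto
  also have "\<dots> \<in> sets (PiM D (\<lambda>_. count_space UNIV))"
    using fS sing by (intro sets.finite_UN) auto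
  finally show "F -` A \<inter> ?S \<in> sets (PiM D (\<lambda>_. count_space UNIV))" .
qed auto

lemma err_le:
  "err \<gamma> t \<le> \<bar>\<gamma> - real_of_int k / 2 ^ t\<bar>"
  unfolding err_def by (rule cInf_lower) (auto intro!: bdd_belowI[where m=0])

lemma err_nonneg: "err \<gamma> t \<ge> 0"
  unfolding err_def by (rule cInf_greatest) auto


lemma hoeff_gen:
  fixes M :: "'a pmf" and X :: "nat \<Rightarrow> 'a \<Rightarrow> real"
  assumes ind: "prob_space.indep_vars (measure_pmf M) (\<lambda>_. borel) X S"
    and fin: "finite S" and ne: "S \<noteq> {}" and bnd: "\<And>i x. i \<in> S \<Longrightarrow> X i x \<in> {0..1}"
    and t: "t \<ge> 0"
  shows "measure M {x. (\<Sum>i\<in>S. X i x) \<ge> (\<Sum>i\<in>S. measure_pmf.expectation M (X i)) + t}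
           \<le> exp (-2 * t\<^sup>2 / card S)"
    and "measure M {x. (\<Sum>i\<in>S. X i x) \<le> (\<Sum>i\<in>S. measure_pmf.expectation M (X i)) - t}
           \<le> exp (-2 * t\<^sup>2 / card S)"
proof -
  interpret H: Hoeffding_ineq "measure_pmf M" S X "\<lambda>_. 0" "\<lambda>_. 1"
     "\<Sum>i\<in>S. measure_pmf.expectation M (X i)"
  proof unfold_locales
    show "finite S" by (rule fin)
    show "prob_space.indep_vars (measure_pmf M) (\<lambda>_. borel) X S" by (rule ind)
    fix i assume "i \<in> S"
    thus "AE x in measure_pmf M. X i x \<in> {0..1}" using bnd by (intro AE_I2) blast
  qed
  have s: "(\<Sum>i\<in>S. ((1::real) - 0)\<^sup>2) = card S" by simp
  have pos: "(\<Sum>i\<in>S. ((1::real) - 0)\<^sup>2) > 0" using s fin ne by (simp add: card_gt_0_iff)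
  show "measure M {x. (\<Sum>i\<in>S. X i x) \<ge> (\<Sum>i\<in>S. measure_pmf.expectation M (X i)) + t}
           \<le> exp (-2 * t\<^sup>2 / card S)"
    using H.Hoeffding_ineq_ge[OF t pos] by (simp add: s)
  show "measure M {x. (\<Sum>i\<in>S. X i x) \<le> (\<Sum>i\<in>S. measure_pmf.expectation M (X i)) - t}
           \<le> exp (-2 * t\<^sup>2 / card S)"
    using H.Hoeffding_ineq_le[OF t pos] by (simp add: s)
qed

definition cubeS :: "nat set \<Rightarrow> (nat \<Rightarrow> bool) set" where
  "cubeS A = {f. \<forall>x. x \<notin> A \<longrightarrow> f x = False}"

lemma finite_cubeS: "finite A \<Longrightarrow> finite (cubeS A)"
proof -
  assume "finite A"
  moreover have "cubeS A = PiE_dflt A False (\<lambda>_. UNIV)" by (auto simp: cubeS_def PiE_dflt_def)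
  ultimately show ?thesis by auto
qed

lemma measure_Pi_half:
  assumes "finite A"
  shows "measure (Pi_pmf A False (\<lambda>_. bernoulli_pmf (1/2))) B = real (card (B \<inter> cubeS A)) / 2 ^ card A"
proof -
  let ?P = "Pi_pmf A False (\<lambda>_. bernoulli_pmf (1/2))"
  have e: "B \<inter> set_pmf ?P = (B \<inter> cubeS A) \<inter> set_pmf ?P"
    using set_Pi_pmf_subset[OF assms, of False "\<lambda>_. bernoulli_pmf (1/2)"] by (auto simp: cubeS_def)
  have "measure ?P B = measure ?P (B \<inter> set_pmf ?P)" by (rule measure_Int_set_pmf[symmetric])
  also have "\<dots> = measure ?P ((B \<inter> cubeS A) \<inter> set_pmf ?P)" by (simp only: e)
  also have "\<dots> = measure ?P (B \<inter> cubeS A)" by (rule measure_Int_set_pmf)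
  also have "\<dots> = (\<Sum>y\<in>B \<inter> cubeS A. pmf ?P y)"
    using finite_cubeS[OF assms] by (simp add: measure_measure_pmf_finite)
  also have "\<dots> = (\<Sum>y\<in>B \<inter> cubeS A. (1/2) ^ card A)"
    using assms by (intro sum.cong refl, subst pmf_Pi') (auto simp: cubeS_def)
  finally show ?thesis by (simp add: power_one_over)
qed

lemma pdist:
  assumes card: "card (dep_set m g i) \<le> d"
  shows "\<bar>measure (Ux m) {x. g x i} - \<gamma>\<bar> \<ge> err \<gamma> d"
proof -
  define D where "D = dep_set m g i"
  have Dsub: "D \<subseteq> {..<m}" by (simp add: D_def dep_set_sub)
  have fD: "finite D" using Dsub finite_subset by blast
  define ext where "ext = (\<lambda>(f::nat\<Rightarrow>bool) x. if x \<in> D then f x else False)"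
  have "measure (Ux m) {x. g x i} = measure (Ux m) ({x. g x i} \<inter> cube m)"
    unfolding Ux_def by (rule measure_restrict_cube)
  also have "{x. g x i} \<inter> cube m = {x. g (ext x) i} \<inter> cube m"
  proof -
    have "g x i = g (ext x) i" if "x \<in> cube m" for x
      using that Dsub by (intro dep_only) (auto simp: cube_def ext_def D_def)
    thus ?thesis by auto
  qed
  also have "measure (Ux m) \<dots> = measure (Ux m) {x. g (ext x) i}"
    unfolding Ux_def by (rule measure_restrict_cube[symmetric])
  also have "\<dots> = measure (map_pmf ext (Ux m)) {z. g z i}" by simp
  also have "map_pmf ext (Ux m) = Pi_pmf D False (\<lambda>_. bernoulli_pmf (1/2))"
    unfolding Ux_def ext_def by (rule Pi_pmf_subset[symmetric]) (use Dsub in auto)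
  also have "measure \<dots> {z. g z i} = real (card ({z. g z i} \<inter> cubeS D)) / 2 ^ card D"
    by (rule measure_Pi_half[OF fD])
  finally have p: "measure (Ux m) {x. g x i} = real (card ({z. g z i} \<inter> cubeS D)) / 2 ^ card D" .
  define K where "K = card ({z. g z i} \<inter> cubeS D)"
  have cd: "card D \<le> d" using card by (simp add: D_def)
  have "real K / 2 ^ card D = real_of_int (int (K * 2 ^ (d - card D))) / 2 ^ d"
  proof -
    have "(2::real) ^ d = 2 ^ card D * 2 ^ (d - card D)"
      using cd by (simp flip: power_add)
    thus ?thesis by simp
  qed
  hence "measure (Ux m) {x. g x i} = real_of_int (int (K * 2 ^ (d - card D))) / 2 ^ d"
    using p K_def by simp
  thus ?thesis using err_le[of \<gamma> d "int (K * 2 ^ (d - card D))"] by (simp add: abs_minus_commute)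
qed


lemma expect_if: "measure_pmf.expectation M (\<lambda>x. if P x then 1 else 0 :: real) = measure M {x. P x}"
proof -
  have "(\<lambda>x. if P x then 1 else 0 :: real) = indicator {x. P x}" by (auto simp: indicator_def fun_eq_iff)
  thus ?thesis by simp
qed

theorem mainTheorem3:
  fixes m n d r :: nat and \<gamma> :: real
    and g :: "(nat \<Rightarrow> bool) \<Rightarrow> (nat \<Rightarrow> bool)"
  assumes "0 \<le> \<gamma>" and "\<gamma> \<le> 1"
    and "\<forall>x\<in>cube m. g x \<in> cube n"
    and "dr_local m n g d r"
  shows "tv_dist n (push_unif m g) (biased n \<gamma>)
           \<ge> 1 - 2 * exp (- ((err \<gamma> d)\<^sup>2 * real r / 2))"
proof -
  from assms(4) obtain S where S: "S \<subseteq> {..<n}" "card S = r"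
    and disj: "\<forall>i\<in>S. \<forall>j\<in>S. i \<noteq> j \<longrightarrow> dep_set m g i \<inter> dep_set m g j = {}"
    and dl: "d_local m n g d" unfolding dr_local_def by blast
  have tv0: "tv_dist n (push_unif m g) (biased n \<gamma>) \<ge> 0" unfolding tv_dist_def by (simp add: sum_nonneg)
  show ?thesis
  proof (cases "r = 0")
    case True thus ?thesis using tv0 by simp
  next
    case False
    have fS: "finite S" using S finite_subset by blast
    have neS: "S \<noteq> {}" using S False by auto
    define \<epsilon> where "\<epsilon> = err \<gamma> d"
    define p where "p i = measure (Ux m) {x. g x i}" for i
    define \<sigma> where "\<sigma> i = (\<gamma> \<le> p i)" for i
    define X where "X i y = (if y i = \<sigma> i then 1 else 0 :: real)" for i and y :: "nat \<Rightarrow> bool"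
    define \<mu>b where "\<mu>b = (\<Sum>i\<in>S. if \<sigma> i then \<gamma> else 1 - \<gamma>)"
    define t where "t = real r * \<epsilon> / 2"
    define A where "A = {y \<in> cube n. (\<Sum>i\<in>S. X i y) \<ge> \<mu>b + t}"
    define Ub where "Ub = Pi_pmf {..<n} False (\<lambda>_. bernoulli_pmf \<gamma>)"
    define Pg where "Pg = map_pmf g (Ux m)"
    have t0: "t \<ge> 0" using err_nonneg by (simp add: t_def \<epsilon>_def)
    have ex: "exp (-2 * t\<^sup>2 / card S) = exp (- ((err \<gamma> d)\<^sup>2 * real r / 2))"
      using False S by (simp add: t_def \<epsilon>_def power2_eq_square field_simps)
    have setPg: "set_pmf Pg \<subseteq> cube n" using assms(3) set_pmf_Pi_cube[of m] unfolding Pg_def Ux_def by auto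
    have setUb: "set_pmf Ub \<subseteq> cube n" unfolding Ub_def by (rule set_pmf_Pi_cube)
    have tv_eq: "tv_dist n (push_unif m g) (biased n \<gamma>) = (1/2) * (\<Sum>y\<in>cube n. \<bar>pmf Pg y - pmf Ub y\<bar>)"
      unfolding tv_dist_def Pg_def Ub_def using assms(1,2) by (auto simp: pmf_map_Ux pmf_Ub intro!: sum.cong)
    have tvA: "(1/2) * (\<Sum>y\<in>cube n. \<bar>pmf Pg y - pmf Ub y\<bar>) \<ge> measure Pg A - measure Ub A"
      by (rule tv_lemma[OF finite_cube setPg setUb]) (auto simp: A_def)
    have EUb: "measure_pmf.expectation Ub (X i) = (if \<sigma> i then \<gamma> else 1-\<gamma>)" if i: "i \<in> S" for i
    proof -
      have "measure_pmf.expectation Ub (X i) =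
            measure_pmf.expectation (map_pmf (\<lambda>y. y i) Ub) (\<lambda>b. if b = \<sigma> i then 1 else 0)"
        by (simp add: X_def[abs_def])
      also have "map_pmf (\<lambda>y. y i) Ub = bernoulli_pmf \<gamma>"
        unfolding Ub_def using i S by (subst Pi_pmf_component) auto
      finally show ?thesis using assms(1,2) by simp
    qed
    have sumEUb: "(\<Sum>i\<in>S. measure_pmf.expectation Ub (X i)) = \<mu>b"
      unfolding \<mu>b_def by (rule sum.cong) (auto simp: EUb)
    have indUb0: "prob_space.indep_vars (measure_pmf Ub) (\<lambda>_. count_space UNIV) (\<lambda>x f. f x) S"
      unfolding Ub_def
      by (rule prob_space.indep_vars_subset[OF measure_pmf.prob_space_axioms indep_vars_Pi_pmf]) (use S in auto)
    have "prob_space.indep_vars (measure_pmf Ub) (\<lambda>_. borel)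
            (\<lambda>i x. (\<lambda>b. if b = \<sigma> i then 1 else (0::real)) ((\<lambda>x f. f x) i x)) S"
      by (rule prob_space.indep_vars_compose2[OF measure_pmf.prob_space_axioms indUb0]) auto
    hence indUb: "prob_space.indep_vars (measure_pmf Ub) (\<lambda>_. borel) X S"
      by (simp add: X_def[abs_def])
    have bUb: "measure Ub A \<le> exp (-2 * t\<^sup>2 / card S)"
    proof -
      have "measure Ub A \<le> measure Ub {y. (\<Sum>i\<in>S. X i y) \<ge> (\<Sum>i\<in>S. measure_pmf.expectation Ub (X i)) + t}"
        by (intro measure_pmf.finite_measure_mono) (auto simp: A_def sumEUb)
      also have "\<dots> \<le> exp (-2 * t\<^sup>2 / card S)"
        by (rule hoeff_gen(1)[OF indUb fS neS _ t0]) (auto simp: X_def)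
      finally show ?thesis .
    qed
    define D where "D i = dep_set m g i" for i
    define ext where "ext i \<omega> = (\<lambda>j. if j \<in> D i then \<omega> j else False)" for i and \<omega> :: "nat \<Rightarrow> bool"
    define Y where "Y i \<omega> = (if g (ext i \<omega>) i = \<sigma> i then 1 else 0::real)" for i \<omega>
    have Dsub: "D i \<subseteq> {..<m}" for i by (simp add: D_def dep_set_sub)
    have fD: "finite (D i)" for i using Dsub finite_subset by blast
    have gext: "g (ext i \<omega>) i = g \<omega> i" if "\<omega> \<in> cube m" for i \<omega>
      using that Dsub[of i] by (intro dep_only) (auto simp: cube_def ext_def D_def)
    have indUx0: "prob_space.indep_vars (measure_pmf (Ux m)) (\<lambda>_. count_space UNIV) (\<lambda>x f. f x) {..<m}"
      unfolding Ux_def by (rule indep_vars_Pi_pmf) auto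
    have indUx1: "prob_space.indep_vars (measure_pmf (Ux m)) (\<lambda>j. PiM (D j) (\<lambda>_. count_space UNIV))
          (\<lambda>j \<omega>. restrict (\<lambda>i. \<omega> i) (D j)) S"
      by (rule prob_space.indep_vars_restrict[OF measure_pmf.prob_space_axioms indUx0])
         (use Dsub disj in \<open>auto simp: disjoint_family_on_def D_def\<close>)
    have "prob_space.indep_vars (measure_pmf (Ux m)) (\<lambda>_. borel)
          (\<lambda>i \<omega>. (\<lambda>z. if g (\<lambda>j. if j \<in> D i then z j else False) i = \<sigma> i then 1 else (0::real))
             ((\<lambda>j \<omega>. restrict (\<lambda>i. \<omega> i) (D j)) i \<omega>)) S"
      by (rule prob_space.indep_vars_compose2[OF measure_pmf.prob_space_axioms indUx1])
         (rule measurable_PiM_finite[OF fD])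
    hence indUx: "prob_space.indep_vars (measure_pmf (Ux m)) (\<lambda>_. borel) Y S"
      by (simp add: Y_def[abs_def] ext_def[abs_def] cong: if_cong)
    have EUx: "measure_pmf.expectation (Ux m) (Y i) = (if \<sigma> i then p i else 1 - p i)" for i
    proof -
      have "measure_pmf.expectation (Ux m) (Y i) = measure (Ux m) {\<omega>. g (ext i \<omega>) i = \<sigma> i}"
        unfolding Y_def by (rule expect_if)
      also have "\<dots> = measure (Ux m) ({\<omega>. g (ext i \<omega>) i = \<sigma> i} \<inter> cube m)"
        unfolding Ux_def by (rule measure_restrict_cube)
      also have "{\<omega>. g (ext i \<omega>) i = \<sigma> i} \<inter> cube m = {\<omega>. g \<omega> i = \<sigma> i} \<inter> cube m"
        using gext by auto
      also have "measure (Ux m) \<dots> = measure (Ux m) {\<omega>. g \<omega> i = \<sigma> i}"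
        unfolding Ux_def by (rule measure_restrict_cube[symmetric])
      also have "\<dots> = (if \<sigma> i then p i else 1 - p i)"
      proof (cases "\<sigma> i")
        case True thus ?thesis by (simp add: p_def)
      next
        case False
        have "{\<omega>. g \<omega> i = \<sigma> i} = space (measure_pmf (Ux m)) - {x. g x i}" using False by auto
        moreover have "measure (Ux m) (space (measure_pmf (Ux m)) - {x. g x i}) = 1 - measure (Ux m) {x. g x i}"
          by (rule measure_pmf.prob_compl) simp
        ultimately show ?thesis using False by (simp add: p_def)
      qed
      finally show ?thesis .
    qed
    have Egap: "measure_pmf.expectation (Ux m) (Y i) \<ge> (if \<sigma> i then \<gamma> else 1 - \<gamma>) + \<epsilon>" if i: "i \<in> S" for i
    proof -
      have "card (dep_set m g i) \<le> d" using dl i S unfolding d_local_def by auto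
      hence pd: "\<bar>p i - \<gamma>\<bar> \<ge> \<epsilon>" unfolding p_def \<epsilon>_def by (rule pdist)
      show ?thesis using pd by (auto simp: EUx \<sigma>_def)
    qed
    define \<mu>g where "\<mu>g = (\<Sum>i\<in>S. measure_pmf.expectation (Ux m) (Y i))"
    have "\<mu>g \<ge> (\<Sum>i\<in>S. (if \<sigma> i then \<gamma> else 1 - \<gamma>) + \<epsilon>)"
      unfolding \<mu>g_def by (rule sum_mono) (rule Egap)
    hence mug: "\<mu>g \<ge> \<mu>b + 2 * t"
      using S by (simp add: sum.distrib \<mu>b_def t_def)
    have bPg: "measure Pg (UNIV - A) \<le> exp (-2 * t\<^sup>2 / card S)"
    proof -
      have "measure Pg (UNIV - A) = measure (Ux m) (g -` (UNIV - A))" by (simp add: Pg_def)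
      also have "\<dots> = measure (Ux m) (g -` (UNIV - A) \<inter> cube m)"
        unfolding Ux_def by (rule measure_restrict_cube)
      also have "\<dots> \<le> measure (Ux m) {\<omega>. (\<Sum>i\<in>S. Y i \<omega>) \<le> \<mu>g - t}"
      proof (intro measure_pmf.finite_measure_mono subsetI)
        fix \<omega> assume w: "\<omega> \<in> g -` (UNIV - A) \<inter> cube m"
        hence "g \<omega> \<in> cube n" using assms(3) by auto
        hence lt: "(\<Sum>i\<in>S. X i (g \<omega>)) < \<mu>b + t" using w by (auto simp: A_def)
        have "(\<Sum>i\<in>S. Y i \<omega>) = (\<Sum>i\<in>S. X i (g \<omega>))"
          using w gext by (intro sum.cong) (auto simp: Y_def X_def)
        thus "\<omega> \<in> {\<omega>. (\<Sum>i\<in>S. Y i \<omega>) \<le> \<mu>g - t}" using lt mug by auto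
      qed auto
      also have "\<dots> \<le> exp (-2 * t\<^sup>2 / card S)"
        unfolding \<mu>g_def by (rule hoeff_gen(2)[OF indUx fS neS _ t0]) (auto simp: Y_def)
      finally show ?thesis .
    qed
    have "measure Pg A = 1 - measure Pg (UNIV - A)"
      using measure_pmf.prob_compl[of A Pg] by simp
    thus ?thesis using tv_eq tvA bUb bPg ex by linarith
  qed
qed

end
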